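(* Let $\mathcal{A}\in\mathbb{C}^{I_{1\ldots N}\times I_{1\ldots N}}$ satisfy $W(\mathcal{A})=W(\mathcal{A}^H)$, and let $\mathcal{M}=\mathcal{N}=\beta\mathcal{I}\in\mathbb{C}^{I_{1\ldots N}\times I_{1\ldots N}}$ be Hermitian positive definite tensors ($\beta$ a scalar, $\mathcal{I}$ the identity tensor). Then $W(\mathcal{A})\cap\mu^2W(\mathcal{A}^{\dagger}_{\mathcal{M},\mathcal{N}})\neq\emptyset$ for every $(\mathcal{M},\mathcal{N})$ singular value $\mu$ of $\mathcal{A}$.
   Context: Write $I_{1\ldots N}$ for $I_1\times\cdots\times I_N$. Einstein product: $(\mathcal{A}*_N\mathcal{B})_{i_1\ldots i_Nj_1\ldots j_L}=\sum_{k_1,\ldots,k_N}a_{i_1\ldots i_Nk_1\ldots k_N}b_{k_1\ldots k_Nj_1\ldots j_L}$ (also when $\mathcal{B}\in\mathbb{C}^{I_{1\ldots N}}$). $\mathcal{A}^H$ is the conjugate transpose; the identity tensor $\mathcal{I}$ has entry 1 where the two index blocks coincide, 0 elsewhere. $\langle\mathcal{X},\mathcal{Y}\rangle=\mathcal{Y}^H*_N\mathcal{X}$, $\|\mathcal{X}\|=\langle\mathcal{X},\mathcal{X}\rangle^{1/2}$. A tensor $\mathcal{M}$ is Hermitian positive definite if $\mathcal{M}^H=\mathcal{M}$ and $\langle\mathcal{M}*_N\mathcal{X},\mathcal{X}\rangle>0$ for nonzero $\mathcal{X}$. Numerical range: $W(\mathcal{A})=\{\langle\mathcal{A}*_N\mathcal{X},\mathcal{X}\rangle:\|\mathcal{X}\|=1\}$;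 $\mu^2W=\{\mu^2z:z\in W\}$. Weighted Moore-Penrose inverse $\mathcal{A}^{\dagger}_{\mathcal{M},\mathcal{N}}$: the unique $\mathcal{X}$ with $\mathcal{A}*_N\mathcal{X}*_N\mathcal{A}=\mathcal{A}$, $\mathcal{X}*_N\mathcal{A}*_N\mathcal{X}=\mathcal{X}$, $(\mathcal{M}*_N\mathcal{A}*_N\mathcal{X})^H=\mathcal{M}*_N\mathcal{A}*_N\mathcal{X}$, $(\mathcal{N}*_N\mathcal{X}*_N\mathcal{A})^H=\mathcal{N}*_N\mathcal{X}*_N\mathcal{A}$. $(\mathcal{M},\mathcal{N})$ singular values: writing $\mathcal{A}=\mathcal{U}*_N\mathcal{S}*_N\mathcal{V}^H$ with $\mathcal{U}^H*_N\mathcal{M}*_N\mathcal{U}=\mathcal{I}$, $\mathcal{V}^H*_N\mathcal{N}^{-1}*_N\mathcal{V}=\mathcal{I}$ and $\mathcal{S}$ a real tensor whose only nonzero entries are positive numbers at positions with equal linear indices $I=J\le r$ ($r$ the rank of the reshaped $(I_1\cdots I_N)\times(I_1\cdots I_N)$ matrix of $\mathcal{A}$), these positive numbers are the $(\mathcal{M},\mathcal{N})$ singular values; equivalently, the nonzero singular values of $\mathcal{M}^{1/2}*_N\mathcal{A}*_N\mathcal{N}^{-1/2}$. *)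

theory Defs
  imports Complex_Main
begin

text \<open>Tensors in C^(I_1 x ... x I_N x I_1 x ... x I_N) are modelled as functions of two
  multi-indices (nat lists of length N), required to vanish outside the index box.
  The dimension list I = [I_1, ..., I_N] is explicit (N = length I), indices are 0-based.\<close>

definition idx :: "nat list \<Rightarrow> nat list set" where
  "idx I = {is. length is = length I \<and> (\<forall>k<length I. is ! k < I ! k)}"

type_synonym tensor = "nat list \<Rightarrow> nat list \<Rightarrow> complex"
type_synonym tvec = "nat list \<Rightarrow> complex"

definition is_tensor :: "nat list \<Rightarrow> tensor \<Rightarrow> bool" where
  "is_tensor I A \<longleftrightarrow> (\<forall>i j. i \<notin> idx I \<or> j \<notin> idx I \<longrightarrow> A i j = 0)"

definition is_vec :: "nat list \<Rightarrow> tvec \<Rightarrow> bool" where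
  "is_vec I X \<longleftrightarrow> (\<forall>i. i \<notin> idx I \<longrightarrow> X i = 0)"

definition ein :: "nat list \<Rightarrow> tensor \<Rightarrow> tensor \<Rightarrow> tensor" where
  "ein I A B = (\<lambda>i j. if i \<in> idx I \<and> j \<in> idx I then (\<Sum>k\<in>idx I. A i k * B k j) else 0)"

definition einv :: "nat list \<Rightarrow> tensor \<Rightarrow> tvec \<Rightarrow> tvec" where
  "einv I A X = (\<lambda>i. if i \<in> idx I then (\<Sum>k\<in>idx I. A i k * X k) else 0)"

definition ctrans :: "tensor \<Rightarrow> tensor" where
  "ctrans A = (\<lambda>i j. cnj (A j i))"

definition idt :: "nat list \<Rightarrow> tensor" where
  "idt I = (\<lambda>i j. if i \<in> idx I \<and> i = j then 1 else 0)"

definition tinner :: "nat list \<Rightarrow> tvec \<Rightarrow> tvec \<Rightarrow> complex" where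
  "tinner I X Y = (\<Sum>i\<in>idx I. cnj (Y i) * X i)"

definition tnorm :: "nat list \<Rightarrow> tvec \<Rightarrow> real" where
  "tnorm I X = sqrt (Re (tinner I X X))"

definition numrange :: "nat list \<Rightarrow> tensor \<Rightarrow> complex set" where
  "numrange I A = {tinner I (einv I A X) X | X. is_vec I X \<and> tnorm I X = 1}"

definition hpd :: "nat list \<Rightarrow> tensor \<Rightarrow> bool" where
  "hpd I M \<longleftrightarrow> is_tensor I M \<and> ctrans M = M \<and>
     (\<forall>X. is_vec I X \<and> X \<noteq> (\<lambda>_. 0) \<longrightarrow>
        tinner I (einv I M X) X \<in> \<real> \<and> Re (tinner I (einv I M X) X) > 0)"

definition tinv :: "nat list \<Rightarrow> tensor \<Rightarrow> tensor" where
  "tinv I N = (THE X. is_tensor I X \<and> ein I N X = idt I)"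

definition wmp :: "nat list \<Rightarrow> tensor \<Rightarrow> tensor \<Rightarrow> tensor \<Rightarrow> tensor" where
  "wmp I M N A = (THE X. is_tensor I X \<and>
      ein I (ein I A X) A = A \<and>
      ein I (ein I X A) X = X \<and>
      ctrans (ein I (ein I M A) X) = ein I (ein I M A) X \<and>
      ctrans (ein I (ein I N X) A) = ein I (ein I N X) A)"

definition mn_singular_value :: "nat list \<Rightarrow> tensor \<Rightarrow> tensor \<Rightarrow> tensor \<Rightarrow> real \<Rightarrow> bool" where
  "mn_singular_value I M N A \<mu> \<longleftrightarrow>
    (\<exists>U S V. is_tensor I U \<and> is_tensor I S \<and> is_tensor I V \<and>
      ein I (ein I (ctrans U) M) U = idt I \<and>
      ein I (ein I (ctrans V) (tinv I N)) V = idt I \<and>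
      A = ein I (ein I U S) (ctrans V) \<and>
      (\<forall>i j. S i j \<in> \<real>) \<and>
      (\<forall>i j. i \<noteq> j \<longrightarrow> S i j = 0) \<and>
      (\<forall>i. S i i \<noteq> 0 \<longrightarrow> Re (S i i) > 0) \<and>
      \<mu> > 0 \<and> (\<exists>i\<in>idx I. S i i = complex_of_real \<mu>))"

end

theory Submission
  imports Defs
begin


lemma finite_idx: "finite (idx I)"
proof -
  have "idx I \<subseteq> {xs. set xs \<subseteq> {..<Max (insert 0 (set I))} \<and> length xs = length I}"
  proof
    fix xs assume "xs \<in> idx I"
    hence l: "length xs = length I" and b: "\<forall>k<length I. xs ! k < I ! k" by (auto simp: idx_def)
    have "set xs \<subseteq> {..<Max (insert 0 (set I))}"
    proof
      fix a assume "a \<in> set xs"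
      then obtain k where k: "k < length xs" "xs ! k = a" by (auto simp: in_set_conv_nth)
      have "I ! k \<in> set I" using k l by simp
      hence "I ! k \<le> Max (insert 0 (set I))" by simp
      moreover have "a < I ! k" using b k l by auto
      ultimately show "a \<in> {..<Max (insert 0 (set I))}" by simp
    qed
    thus "xs \<in> {xs. set xs \<subseteq> {..<Max (insert 0 (set I))} \<and> length xs = length I}" using l by simp
  qed
  moreover have "finite {xs. set xs \<subseteq> {..<Max (insert 0 (set I))} \<and> length xs = length I}"
    by (rule finite_lists_length_eq) simp
  ultimately show ?thesis by (rule finite_subset)
qed

definition smul :: "complex \<Rightarrow> tensor \<Rightarrow> tensor" where
  "smul c A = (\<lambda>i j. c * A i j)"

lemma ein_assoc: "ein I (ein I A B) C = ein I A (ein I B C)"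
  unfolding ein_def
  by (auto simp: fun_eq_iff sum_distrib_left sum_distrib_right mult.assoc intro: sum.swap)

lemma ctrans_ein: "ctrans (ein I A B) = ein I (ctrans B) (ctrans A)"
  unfolding ein_def ctrans_def by (auto simp: fun_eq_iff mult.commute)

lemma ctrans_ctrans[simp]: "ctrans (ctrans A) = A"
  unfolding ctrans_def by simp

lemma ctrans_smul[simp]: "ctrans (smul c A) = smul (cnj c) (ctrans A)"
  unfolding ctrans_def smul_def by simp

lemma ein_smul_l[simp]: "ein I (smul c A) B = smul c (ein I A B)"
  unfolding ein_def smul_def by (auto simp: fun_eq_iff sum_distrib_left mult.assoc)

lemma ein_smul_r[simp]: "ein I A (smul c B) = smul c (ein I A B)"
  unfolding ein_def smul_def by (auto simp: fun_eq_iff sum_distrib_left mult.left_commute)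

lemma smul_smul[simp]: "smul c (smul d A) = smul (c*d) A"
  unfolding smul_def by (simp add: mult.assoc)

lemma smul_one[simp]: "smul 1 A = A"
  unfolding smul_def by simp

lemma is_tensor_ein[simp]: "is_tensor I (ein I A B)"
  unfolding is_tensor_def ein_def by auto

lemma is_tensor_ctrans[simp]: "is_tensor I A \<Longrightarrow> is_tensor I (ctrans A)"
  unfolding is_tensor_def ctrans_def by auto

lemma ein_idt_l: "is_tensor I B \<Longrightarrow> ein I (idt I) B = B"
  unfolding is_tensor_def ein_def idt_def
  by (auto simp: fun_eq_iff if_distrib[of "\<lambda>x. x * _"] finite_idx cong: if_cong)

lemma ein_idt_r: "is_tensor I B \<Longrightarrow> ein I B (idt I) = B"
  unfolding is_tensor_def ein_def idt_def
  by (auto simp: fun_eq_iff if_distrib[of "\<lambda>x. _ * x"] finite_idx cong: if_cong)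

lemma ein_idt_ein[simp]: "ein I (idt I) (ein I A B) = ein I A B"
  by (simp add: ein_idt_l)

lemma scal_eq: "(\<lambda>i j. c * idt I i j) = smul c (idt I)"
  unfolding smul_def by simp



definition mpP :: "nat list \<Rightarrow> tensor \<Rightarrow> tensor \<Rightarrow> bool" where
  "mpP I A X \<longleftrightarrow> is_tensor I X \<and> ein I (ein I A X) A = A \<and> ein I (ein I X A) X = X \<and>
     ctrans (ein I A X) = ein I A X \<and> ctrans (ein I X A) = ein I X A"

lemma mp_unique:
  assumes "mpP I A X" "mpP I A Y"
  shows "X = Y"
proof -
  from assms have x1: "ein I (ein I A X) A = A" and x2: "ein I (ein I X A) X = X"
    and x3: "ctrans (ein I A X) = ein I A X" and x4: "ctrans (ein I X A) = ein I X A"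
    and y1: "ein I (ein I A Y) A = A" and y2: "ein I (ein I Y A) Y = Y"
    and y3: "ctrans (ein I A Y) = ein I A Y" and y4: "ctrans (ein I Y A) = ein I Y A"
    unfolding mpP_def by auto
  have cA1: "ctrans A = ein I (ctrans A) (ein I A Y)"
    by (metis y1 y3 ctrans_ein)
  have "X = ein I X (ein I (ctrans X) (ctrans A))"
    by (metis x2 x3 ein_assoc ctrans_ein)
  also have "\<dots> = ein I X (ein I (ein I (ctrans X) (ctrans A)) (ein I A Y))"
    by (metis cA1 ein_assoc)
  also have "\<dots> = ein I X (ein I (ein I A X) (ein I A Y))"
    by (metis x3 ctrans_ein)
  also have "\<dots> = ein I X (ein I A Y)"
    by (metis x2 ein_assoc)
  finally have X: "X = ein I X (ein I A Y)" .
  have cA2: "ctrans A = ein I (ein I X A) (ctrans A)"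
    by (metis x1 x4 ctrans_ein ein_assoc)
  have "Y = ein I (ein I (ctrans A) (ctrans Y)) Y"
    by (metis y2 y4 ctrans_ein)
  also have "\<dots> = ein I (ein I (ein I X A) (ein I (ctrans A) (ctrans Y))) Y"
    by (metis cA2 ein_assoc)
  also have "\<dots> = ein I (ein I (ein I X A) (ein I Y A)) Y"
    by (metis y4 ctrans_ein)
  also have "\<dots> = ein I X (ein I A Y)"
    by (metis y2 ein_assoc)
  finally show ?thesis using X by simp
qed

lemma ein_scal_l: "is_tensor I B \<Longrightarrow> ein I (smul c (idt I)) B = smul c B"
  by (simp add: ein_idt_l)
lemma ein_scal_r: "is_tensor I B \<Longrightarrow> ein I B (smul c (idt I)) = smul c B"
  by (simp add: ein_idt_r)

lemma smul_cancel: "c \<noteq> 0 \<Longrightarrow> smul c A = smul c B \<longleftrightarrow> A = B"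
  unfolding smul_def by (auto simp: fun_eq_iff)

lemma wmp_eq:
  assumes "is_tensor I A" "M = smul (complex_of_real b) (idt I)" "b \<noteq> 0"
  shows "wmp I M M A = (THE X. mpP I A X)"
proof -
  have "(\<lambda>X. is_tensor I X \<and>
      ein I (ein I A X) A = A \<and>
      ein I (ein I X A) X = X \<and>
      ctrans (ein I (ein I M A) X) = ein I (ein I M A) X \<and>
      ctrans (ein I (ein I M X) A) = ein I (ein I M X) A) = mpP I A"
  proof (rule ext)
    fix X
    show "(is_tensor I X \<and>
      ein I (ein I A X) A = A \<and>
      ein I (ein I X A) X = X \<and>
      ctrans (ein I (ein I M A) X) = ein I (ein I M A) X \<and>
      ctrans (ein I (ein I M X) A) = ein I (ein I M X) A) = mpP I A X"
      unfolding mpP_def using assms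
      by (auto simp: ein_idt_l smul_cancel)
  qed
  thus ?thesis unfolding wmp_def by simp
qed

lemma tinv_scal:
  assumes "c \<noteq> 0"
  shows "tinv I (smul c (idt I)) = smul (1/c) (idt I)"
  unfolding tinv_def
proof (rule the_equality)
  show "is_tensor I (smul (1 / c) (idt I)) \<and> ein I (smul c (idt I)) (smul (1 / c) (idt I)) = idt I"
  proof
    show "is_tensor I (smul (1 / c) (idt I))" by (auto simp: is_tensor_def smul_def idt_def)
    have "is_tensor I (idt I)" by (auto simp: is_tensor_def idt_def)
    thus "ein I (smul c (idt I)) (smul (1 / c) (idt I)) = idt I" using assms
      by (simp add: ein_idt_l)
  qed
next
  fix X assume "is_tensor I X \<and> ein I (smul c (idt I)) X = idt I"
  hence "smul c X = idt I" "is_tensor I X" by (auto simp: ein_idt_l)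
  thus "X = smul (1 / c) (idt I)" using assms
    by (auto simp: smul_def fun_eq_iff field_simps)
qed



lemma einv_ein: "einv I (ein I P Q) x = einv I P (einv I Q x)"
  unfolding einv_def ein_def
  by (auto simp: fun_eq_iff sum_distrib_left sum_distrib_right mult.assoc intro: sum.swap)

lemma einv_col: "j \<in> idx I \<Longrightarrow> einv I Q (\<lambda>k. c * R k j) = (\<lambda>i. c * ein I Q R i j)"
  unfolding einv_def ein_def by (auto simp: fun_eq_iff sum_distrib_left mult.left_commute)

lemma einv_idtcol: "j \<in> idx I \<Longrightarrow> is_tensor I P \<Longrightarrow> einv I P (\<lambda>k. c * idt I k j) = (\<lambda>i. c * P i j)"
  by (simp add: einv_col ein_idt_r)

lemma tinner_col: "j \<in> idx I \<Longrightarrow>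
  tinner I (\<lambda>k. c * P k j) (\<lambda>k. c' * P k j) = cnj c' * c * ein I (ctrans P) P j j"
  unfolding tinner_def ein_def ctrans_def by (auto simp: sum_distrib_left mult.commute mult.left_commute)

lemma tinner_adj: "tinner I (einv I (ctrans A) x) z = tinner I x (einv I A z)"
  unfolding tinner_def einv_def ctrans_def
  by (auto simp: sum_distrib_left sum_distrib_right mult.commute mult.left_commute intro: sum.swap)

lemma diag_mult: "ein I (\<lambda>i j. if i = j then f i else 0) (\<lambda>i j. if i = j then g i else 0)
  = (\<lambda>i j. if i = j \<and> i \<in> idx I then f i * g i else 0)"
  unfolding ein_def using finite_idx[of I]
  by (auto simp: fun_eq_iff if_distrib[of "\<lambda>x. x * _"] cong: if_cong)



theorem theorem6p10:
  fixes I :: "nat list" and A M N :: tensor and \<beta> :: complex and \<mu> :: real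
  assumes "is_tensor I A"
    and "numrange I A = numrange I (ctrans A)"
    and "M = (\<lambda>i j. \<beta> * idt I i j)" and "N = (\<lambda>i j. \<beta> * idt I i j)"
    and "hpd I M" and "hpd I N"
    and "mn_singular_value I M N A \<mu>"
  shows "numrange I A \<inter> {complex_of_real (\<mu>\<^sup>2) * z | z. z \<in> numrange I (wmp I M N A)} \<noteq> {}"
proof -
  note fin = finite_idx[of I]
  obtain U S V where tU: "is_tensor I U" and tS: "is_tensor I S" and tV: "is_tensor I V"
    and hU: "ein I (ein I (ctrans U) M) U = idt I"
    and hV: "ein I (ein I (ctrans V) (tinv I N)) V = idt I"
    and hA: "A = ein I (ein I U S) (ctrans V)"
    and Sreal: "\<forall>i j. S i j \<in> \<real>" and Sdiag: "\<forall>i j. i \<noteq> j \<longrightarrow> S i j = 0"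
    and mupos: "\<mu> > 0" and i0: "\<exists>i\<in>idx I. S i i = complex_of_real \<mu>"
    using assms(7) unfolding mn_singular_value_def by blast
  from i0 obtain i0 where i0I: "i0 \<in> idx I" and Si0: "S i0 i0 = complex_of_real \<mu>" by blast
  define e where "e = (\<lambda>i::nat list. if i = i0 then (1::complex) else 0)"
  have Me: "einv I M e = (\<lambda>i. \<beta> * e i)"
    unfolding assms(3) einv_def e_def idt_def using fin i0I
    by (auto simp: fun_eq_iff if_distrib[of "\<lambda>x. _ * x"] cong: if_cong)
  have "is_vec I e" "e \<noteq> (\<lambda>_. 0)" using i0I unfolding is_vec_def e_def by (auto simp: fun_eq_iff)
  with assms(5) have "tinner I (einv I M e) e \<in> \<real> \<and> Re (tinner I (einv I M e) e) > 0"
    unfolding hpd_def by blast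
  moreover have "tinner I (\<lambda>i. \<beta> * e i) e = \<beta>"
    unfolding tinner_def e_def using fin i0I
    by (simp add: if_distrib[of "\<lambda>x. _ * x"] cong: if_cong)
  ultimately have breal: "\<beta> \<in> \<real>" and bpos: "Re \<beta> > 0" using Me by auto
  define b where "b = Re \<beta>"
  have hb: "\<beta> = complex_of_real b" using breal unfolding b_def
    by (simp add: complex_is_Real_iff complex_eq_iff)
  have bpos': "b > 0" using bpos b_def by simp
  have bnz: "\<beta> \<noteq> 0" using bpos by auto
  have cb: "cnj \<beta> = \<beta>" using hb by simp
  have MN: "M = smul \<beta> (idt I)" "N = smul \<beta> (idt I)" using assms(3,4) scal_eq by auto
  have tinvN: "tinv I N = smul (1/\<beta>) (idt I)" using MN tinv_scal bnz by simp
  have tUh: "is_tensor I (ctrans U)" and tVh: "is_tensor I (ctrans V)" using tU tV by auto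
  have UU: "ein I (ctrans U) U = smul (1/\<beta>) (idt I)"
  proof -
    have "smul \<beta> (ein I (ctrans U) U) = idt I" using hU MN tUh by (simp add: ein_idt_r)
    hence "smul (1/\<beta>) (smul \<beta> (ein I (ctrans U) U)) = smul (1/\<beta>) (idt I)" by simp
    thus ?thesis using bnz by simp
  qed
  have VV: "ein I (ctrans V) V = smul \<beta> (idt I)"
  proof -
    have "smul (1/\<beta>) (ein I (ctrans V) V) = idt I" using hV tinvN tVh by (simp add: ein_idt_r)
    hence "smul \<beta> (smul (1/\<beta>) (ein I (ctrans V) V)) = smul \<beta> (idt I)" by simp
    thus ?thesis using bnz by simp
  qed
  have UUZ: "ein I (ctrans U) (ein I U Z) = smul (1/\<beta>) Z" if "is_tensor I Z" for Z
    using that by (simp add: ein_assoc[symmetric] UU ein_idt_l)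
  have VVZ: "ein I (ctrans V) (ein I V Z) = smul \<beta> Z" if "is_tensor I Z" for Z
    using that by (simp add: ein_assoc[symmetric] VV ein_idt_l)
  define d where "d = (\<lambda>i. S i i)"
  have Sd: "S = (\<lambda>i j. if i = j then d i else 0)" using Sdiag d_def by (auto simp: fun_eq_iff)
  define Sp :: tensor where "Sp = (\<lambda>i j. if i = j then (if d i \<noteq> 0 then 1 / d i else 0) else 0)"
  define Dg :: tensor where "Dg = (\<lambda>i j. if i = j then (if d i \<noteq> 0 then 1 else 0) else 0)"
  have dout: "i \<notin> idx I \<Longrightarrow> d i = 0" for i using tS unfolding is_tensor_def d_def by auto
  have dreal: "cnj (d i) = d i" for i using Sreal unfolding d_def
    by (metis Reals_cnj_iff)
  have tSp: "is_tensor I Sp" and tDg: "is_tensor I Dg" unfolding is_tensor_def Sp_def Dg_def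
    using dout by auto
  have cS: "ctrans S = S" and cSp: "ctrans Sp = Sp" and cDg: "ctrans Dg = Dg"
    unfolding Sd Sp_def Dg_def ctrans_def using dreal by (auto simp: fun_eq_iff)
  have SSp: "ein I S Sp = Dg" and SpS: "ein I Sp S = Dg" and SDg: "ein I S Dg = S" and SpDg: "ein I Sp Dg = Sp" and DgS: "ein I Dg S = S" and DgSp: "ein I Dg Sp = Sp"
    unfolding Sd Sp_def Dg_def diag_mult using dout
    by (auto simp: fun_eq_iff)
  have SSpZ: "ein I S (ein I Sp Z) = ein I Dg Z" for Z by (simp add: ein_assoc[symmetric] SSp)
  have SpSZ: "ein I Sp (ein I S Z) = ein I Dg Z" for Z by (simp add: ein_assoc[symmetric] SpS)
  have SDgZ: "ein I S (ein I Dg Z) = ein I S Z" for Z by (simp add: ein_assoc[symmetric] SDg)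
  have SpDgZ: "ein I Sp (ein I Dg Z) = ein I Sp Z" for Z by (simp add: ein_assoc[symmetric] SpDg)
  have DgSZ: "ein I Dg (ein I S Z) = ein I S Z" for Z by (simp add: ein_assoc[symmetric] DgS)
  have DgSpZ: "ein I Dg (ein I Sp Z) = ein I Sp Z" for Z by (simp add: ein_assoc[symmetric] DgSp)
  define X0 where "X0 = ein I (ein I V Sp) (ctrans U)"
  note rules = ein_assoc UUZ VVZ SSpZ SpSZ SDgZ SpDgZ DgSZ DgSpZ tU tV tS tSp tDg tUh tVh bnz cb cS cSp cDg ctrans_ein
  have mp: "mpP I A X0"
    unfolding mpP_def X0_def hA by (simp add: rules)
  have wmpX: "wmp I M N A = X0"
  proof -
    have "wmp I M N A = (THE X. mpP I A X)" using wmp_eq[OF assms(1) _ bpos'[THEN less_imp_neq, symmetric]] MN hb by simp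
    also have "\<dots> = X0" using mp mp_unique by blast
    finally show ?thesis .
  qed
  define sb where "sb = complex_of_real (sqrt b)"
  have "sb * sb = complex_of_real (sqrt b * sqrt b)" unfolding sb_def by (simp only: of_real_mult)
  hence sbsq: "sb * sb = \<beta>" unfolding hb using bpos' by simp
  have sbnz: "sb \<noteq> 0" unfolding sb_def using bpos' by simp
  have csb: "cnj sb = sb" unfolding sb_def by (rule complex_cnj_complex_of_real)
  define x where "x = (\<lambda>k. (1/sb) * V k i0)"
  define y where "y = (\<lambda>k. sb * U k i0)"
  have vx: "is_vec I x" and vy: "is_vec I y" using tU tV unfolding x_def y_def is_vec_def is_tensor_def by auto
  have idt0: "idt I i0 i0 = 1" using i0I unfolding idt_def by simp
  have "tinner I x x = cnj (1/sb) * (1/sb) * ein I (ctrans V) V i0 i0"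
    unfolding x_def by (rule tinner_col[OF i0I])
  also have "\<dots> = 1" using sbsq sbnz bnz csb idt0 by (simp add: VV smul_def field_simps)
  finally have nx: "tnorm I x = 1" unfolding tnorm_def by simp
  have "tinner I y y = cnj sb * sb * ein I (ctrans U) U i0 i0"
    unfolding y_def by (rule tinner_col[OF i0I])
  also have "\<dots> = 1" using sbsq sbnz bnz csb idt0 by (simp add: UU smul_def field_simps)
  finally have ny: "tnorm I y = 1" unfolding tnorm_def by simp
  have Scol: "S i i0 = complex_of_real \<mu> * idt I i i0" for i
    using Sdiag Si0 i0I unfolding idt_def by (metis mult_1_right mult_zero_right)
  have Spcol: "Sp i i0 = (1 / complex_of_real \<mu>) * idt I i i0" for i
    using Si0 i0I mupos unfolding idt_def Sp_def d_def by auto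
  have Ax: "einv I A x = (\<lambda>i. complex_of_real \<mu> * y i)"
  proof -
    have "einv I (ctrans V) x = (\<lambda>i. (1/sb) * ein I (ctrans V) V i i0)"
      unfolding x_def by (rule einv_col[OF i0I])
    also have "\<dots> = (\<lambda>i. sb * idt I i i0)" using sbsq sbnz bnz
      by (auto simp: VV smul_def fun_eq_iff field_simps)
    finally have 1: "einv I (ctrans V) x = (\<lambda>i. sb * idt I i i0)" .
    have 2: "einv I S (\<lambda>i. sb * idt I i i0) = (\<lambda>i. (sb * complex_of_real \<mu>) * idt I i i0)"
      unfolding einv_idtcol[OF i0I tS, of sb] Scol by (simp add: mult.assoc)
    have 3: "einv I U (\<lambda>i. (sb * complex_of_real \<mu>) * idt I i i0) = (\<lambda>i. (sb * complex_of_real \<mu>) * U i i0)"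
      by (rule einv_idtcol[OF i0I tU])
    show ?thesis unfolding hA einv_ein 1 2 3 y_def by (simp add: fun_eq_iff mult.commute mult.left_commute)
  qed
  have Xy: "einv I X0 y = (\<lambda>i. (1 / complex_of_real \<mu>) * x i)"
  proof -
    have "einv I (ctrans U) y = (\<lambda>i. sb * ein I (ctrans U) U i i0)"
      unfolding y_def by (rule einv_col[OF i0I])
    also have "\<dots> = (\<lambda>i. (1/sb) * idt I i i0)" using sbsq sbnz bnz
      by (auto simp: UU smul_def fun_eq_iff field_simps)
    finally have 1: "einv I (ctrans U) y = (\<lambda>i. (1/sb) * idt I i i0)" .
    have 2: "einv I Sp (\<lambda>i. (1/sb) * idt I i i0) = (\<lambda>i. ((1/sb) * (1 / complex_of_real \<mu>)) * idt I i i0)"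
      unfolding einv_idtcol[OF i0I tSp, of "1/sb"] Spcol by (simp add: mult.assoc)
    have 3: "einv I V (\<lambda>i. ((1/sb) * (1 / complex_of_real \<mu>)) * idt I i i0) = (\<lambda>i. ((1/sb) * (1 / complex_of_real \<mu>)) * V i i0)"
      by (rule einv_idtcol[OF i0I tV])
    show ?thesis unfolding X0_def einv_ein 1 2 3 x_def by (simp add: fun_eq_iff mult.commute mult.left_commute)
  qed
  define w where "w = tinner I (einv I (ctrans A) x) x"
  have "w \<in> numrange I (ctrans A)" unfolding w_def numrange_def using vx nx by blast
  hence w1: "w \<in> numrange I A" using assms(2) by simp
  have "w = tinner I x (einv I A x)" unfolding w_def by (rule tinner_adj)
  also have "\<dots> = complex_of_real \<mu> * (\<Sum>i\<in>idx I. cnj (y i) * x i)"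
    unfolding Ax tinner_def by (simp add: sum_distrib_left mult.assoc)
  also have "\<dots> = complex_of_real (\<mu>\<^sup>2) * tinner I (einv I X0 y) y"
    unfolding Xy tinner_def using mupos
    by (simp add: sum_distrib_left power2_eq_square field_simps)
  finally have w2: "w = complex_of_real (\<mu>\<^sup>2) * tinner I (einv I X0 y) y" .
  have "tinner I (einv I X0 y) y \<in> numrange I (wmp I M N A)" unfolding wmpX numrange_def using vy ny by blast
  hence "w \<in> {complex_of_real (\<mu>\<^sup>2) * z | z. z \<in> numrange I (wmp I M N A)}" using w2 by blast
  with w1 show ?thesis by blast
qed

end
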